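(* In the two-source game ($m=2$) with $n_1\ge n_2$ and $n=n_1+n_2$, if $n_1\bar q<q\mu/\phi+n_2+\bar q$ and $q>\frac{2}{n}$, then the unique (pure) Nash equilibrium is the profile in which all users choose the direct path, i.e., $u_1=n_1$, $u_2=n_2$.
   Context: Two-source network: sources $s_1,s_2$ and destination $d$; source $s_i$ has a set $N_i$ of $n_i$ users. Each user generates an independent Poisson flow of packets of rate $\phi>0$; each direct link $(s_i,d)$ has service rate $\mu>0$; the sidelink between $s_1$ and $s_2$ loses packets independently with probability $q\in[0,1]$, and $\bar q=1-q$. Only pure strategies: a user of $N_1$ chooses DP $(s_1,d)$ or IP $(s_1,s_2,d)$; a user of $N_2$ chooses DP $(s_2,d)$ or IP $(s_2,s_1,d)$. With $u_i$ users of $N_i$ on DP, $T_1=u_1\phi+(n_2-u_2)\bar q\phi$, $T_2=u_2\phi+(n_1-u_1)\bar q\phi$. The loss rate of a user of $N_i$ is $\phi\frac{T_i}{T_i+\mu}$ on DP and $\phi\left(q+\bar q\frac{T_j}{T_j+\mu}\right)$ on IP to $s_j$. A Nash equilibrium is a pure profile in which no user can strictly decrease its loss rate by unilaterally switching its route. *)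

theory Defs
  imports Complex_Main
begin

text \<open>Users of N_1 are indexed by i < n1, users of N_2 by i < n2.
  A pure profile is a pair (d1, d2) of boolean functions; d1 i = True means
  user i of N_1 uses its direct path (s_1,d), False means the indirect path
  (s_1,s_2,d); similarly for d2. Values outside the index ranges are irrelevant.\<close>

definition num_dp :: "nat \<Rightarrow> (nat \<Rightarrow> bool) \<Rightarrow> nat" where
  "num_dp n d = card {i. i < n \<and> d i}"

definition traffic1 :: "nat \<Rightarrow> nat \<Rightarrow> real \<Rightarrow> real \<Rightarrow> (nat \<Rightarrow> bool) \<Rightarrow> (nat \<Rightarrow> bool) \<Rightarrow> real" where
  "traffic1 n1 n2 \<phi> q d1 d2 =
     real (num_dp n1 d1) * \<phi> + real (n2 - num_dp n2 d2) * (1 - q) * \<phi>"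

definition traffic2 :: "nat \<Rightarrow> nat \<Rightarrow> real \<Rightarrow> real \<Rightarrow> (nat \<Rightarrow> bool) \<Rightarrow> (nat \<Rightarrow> bool) \<Rightarrow> real" where
  "traffic2 n1 n2 \<phi> q d1 d2 =
     real (num_dp n2 d2) * \<phi> + real (n1 - num_dp n1 d1) * (1 - q) * \<phi>"

definition loss1 :: "nat \<Rightarrow> nat \<Rightarrow> real \<Rightarrow> real \<Rightarrow> real \<Rightarrow> (nat \<Rightarrow> bool) \<Rightarrow> (nat \<Rightarrow> bool) \<Rightarrow> nat \<Rightarrow> real" where
  "loss1 n1 n2 \<phi> \<mu> q d1 d2 i =
     (let T1 = traffic1 n1 n2 \<phi> q d1 d2; T2 = traffic2 n1 n2 \<phi> q d1 d2 in
      if d1 i then \<phi> * (T1 / (T1 + \<mu>))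
      else \<phi> * (q + (1 - q) * (T2 / (T2 + \<mu>))))"

definition loss2 :: "nat \<Rightarrow> nat \<Rightarrow> real \<Rightarrow> real \<Rightarrow> real \<Rightarrow> (nat \<Rightarrow> bool) \<Rightarrow> (nat \<Rightarrow> bool) \<Rightarrow> nat \<Rightarrow> real" where
  "loss2 n1 n2 \<phi> \<mu> q d1 d2 i =
     (let T1 = traffic1 n1 n2 \<phi> q d1 d2; T2 = traffic2 n1 n2 \<phi> q d1 d2 in
      if d2 i then \<phi> * (T2 / (T2 + \<mu>))
      else \<phi> * (q + (1 - q) * (T1 / (T1 + \<mu>))))"

definition nash_eq :: "nat \<Rightarrow> nat \<Rightarrow> real \<Rightarrow> real \<Rightarrow> real \<Rightarrow> (nat \<Rightarrow> bool) \<Rightarrow> (nat \<Rightarrow> bool) \<Rightarrow> bool" where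
  "nash_eq n1 n2 \<phi> \<mu> q d1 d2 \<longleftrightarrow>
     (\<forall>i < n1. \<forall>b. \<not> (loss1 n1 n2 \<phi> \<mu> q (d1(i := b)) d2 i < loss1 n1 n2 \<phi> \<mu> q d1 d2 i)) \<and>
     (\<forall>i < n2. \<forall>b. \<not> (loss2 n1 n2 \<phi> \<mu> q d1 (d2(i := b)) i < loss2 n1 n2 \<phi> \<mu> q d1 d2 i))"

end

theory Submission imports Defs begin
lemma key1:
  fixes \<phi> \<mu> q a b :: real
  assumes "\<phi> > 0" "\<mu> > 0" "a \<ge> 0" "b \<ge> 0"
  shows "(\<phi>*(a/(a+\<mu>)) \<le> \<phi>*(q+(1-q)*(b/(b+\<mu>)))) \<longleftrightarrow> (1-q)*(a+\<mu>) \<le> b+\<mu>"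
proof -
  have "(\<phi>*(a/(a+\<mu>)) \<le> \<phi>*(q+(1-q)*(b/(b+\<mu>)))) \<longleftrightarrow> a/(a+\<mu>) \<le> q+(1-q)*(b/(b+\<mu>))"
    using assms(1) by (rule mult_le_cancel_left_pos)
  also have "\<dots> \<longleftrightarrow> a*(b+\<mu>) \<le> q*(a+\<mu>)*(b+\<mu>) + (1-q)*b*(a+\<mu>)"
    using assms by (simp add: field_simps)
  also have "\<dots> \<longleftrightarrow> \<mu>*((1-q)*(a+\<mu>)) \<le> \<mu>*(b+\<mu>)"
    by (simp add: algebra_simps)
  also have "\<dots> \<longleftrightarrow> (1-q)*(a+\<mu>) \<le> b+\<mu>" using assms by simp
  finally show ?thesis .
qed
lemma key2:
  fixes \<phi> \<mu> q a b :: real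
  assumes "\<phi> > 0" "\<mu> > 0" "a \<ge> 0" "b \<ge> 0"
  shows "(\<phi>*(q+(1-q)*(b/(b+\<mu>))) \<le> \<phi>*(a/(a+\<mu>))) \<longleftrightarrow> b+\<mu> \<le> (1-q)*(a+\<mu>)"
proof -
  have "(\<phi>*(q+(1-q)*(b/(b+\<mu>))) \<le> \<phi>*(a/(a+\<mu>))) \<longleftrightarrow> q+(1-q)*(b/(b+\<mu>)) \<le> a/(a+\<mu>)"
    using assms(1) by (rule mult_le_cancel_left_pos)
  also have "\<dots> \<longleftrightarrow> q*(a+\<mu>)*(b+\<mu>) + (1-q)*b*(a+\<mu>) \<le> a*(b+\<mu>)"
    using assms by (simp add: field_simps)
  also have "\<dots> \<longleftrightarrow> \<mu>*(b+\<mu>) \<le> \<mu>*((1-q)*(a+\<mu>))"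
    by (simp add: algebra_simps)
  also have "\<dots> \<longleftrightarrow> b+\<mu> \<le> (1-q)*(a+\<mu>)" using assms by simp
  finally show ?thesis .
qed

lemma num_dp_le: "num_dp n d \<le> n"
  unfolding num_dp_def by (metis (no_types, lifting) card_mono card_lessThan finite_lessThan lessThan_iff mem_Collect_eq subsetI)

lemma num_dp_upd_T: assumes "i < n" "\<not> d i" shows "num_dp n (d(i:=True)) = Suc (num_dp n d)"
proof -
  have "{j. j < n \<and> (d(i:=True)) j} = insert i {j. j < n \<and> d j}" using assms by auto
  then show ?thesis unfolding num_dp_def using assms by (simp add: card_insert_disjoint)
qed

lemma num_dp_upd_F: assumes "i < n" "d i" shows "num_dp n d = Suc (num_dp n (d(i:=False)))"
proof -
  have "{j. j < n \<and> d j} = insert i {j. j < n \<and> (d(i:=False)) j}" using assms by auto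
  then show ?thesis unfolding num_dp_def using assms by (simp add: card_insert_disjoint)
qed

lemma num_dp_less: assumes "i < n" "\<not> d i" shows "num_dp n d < n"
  using num_dp_upd_T[of i n d, OF assms] num_dp_le[of n "d(i:=True)"] by simp

lemma num_dp_all: "num_dp n (\<lambda>_. True) = n"
  unfolding num_dp_def by simp

lemma num_dp_allD: assumes "num_dp n d = n" "i < n" shows "d i"
  using num_dp_less[OF assms(2)] assms(1) by force

lemma traffic_nonneg:
  assumes "\<phi> > 0" "q \<le> 1"
  shows "traffic1 n1 n2 \<phi> q d1 d2 \<ge> 0" "traffic2 n1 n2 \<phi> q d1 d2 \<ge> 0"
  using assms unfolding traffic1_def traffic2_def by (simp_all add: mult_nonneg_nonneg)

lemma condA:
  assumes "\<phi> > 0" "\<mu> > 0" "q \<le> 1" "i < n1" "d1 i"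
    and "\<not> loss1 n1 n2 \<phi> \<mu> q (d1(i:=False)) d2 i < loss1 n1 n2 \<phi> \<mu> q d1 d2 i"
  shows "(1-q)*(traffic1 n1 n2 \<phi> q d1 d2 + \<mu>) \<le> traffic2 n1 n2 \<phi> q d1 d2 + (1-q)*\<phi> + \<mu>"
proof -
  let ?u = "num_dp n1 (d1(i:=False))"
  have e: "num_dp n1 d1 = Suc ?u" using num_dp_upd_F[of i n1 d1] assms by simp
  have le: "num_dp n1 d1 \<le> n1" by (rule num_dp_le)
  have t2: "traffic2 n1 n2 \<phi> q (d1(i:=False)) d2 = traffic2 n1 n2 \<phi> q d1 d2 + (1-q)*\<phi>"
    unfolding traffic2_def using e le by (simp add: of_nat_diff algebra_simps)
  have "loss1 n1 n2 \<phi> \<mu> q d1 d2 i \<le> loss1 n1 n2 \<phi> \<mu> q (d1(i:=False)) d2 i" using assms(6) by simp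
  then have "\<phi>*(traffic1 n1 n2 \<phi> q d1 d2/(traffic1 n1 n2 \<phi> q d1 d2+\<mu>)) \<le>
     \<phi>*(q+(1-q)*(traffic2 n1 n2 \<phi> q (d1(i:=False)) d2/(traffic2 n1 n2 \<phi> q (d1(i:=False)) d2+\<mu>)))"
    unfolding loss1_def Let_def using assms(5) by simp
  then have "(1-q)*(traffic1 n1 n2 \<phi> q d1 d2 + \<mu>) \<le> traffic2 n1 n2 \<phi> q (d1(i:=False)) d2 + \<mu>"
    using key1 assms(1,2) traffic_nonneg[OF assms(1,3)] by blast
  then show ?thesis using t2 by simp
qed

lemma condB:
  assumes "\<phi> > 0" "\<mu> > 0" "q \<le> 1" "i < n1" "\<not> d1 i"
    and "\<not> loss1 n1 n2 \<phi> \<mu> q (d1(i:=True)) d2 i < loss1 n1 n2 \<phi> \<mu> q d1 d2 i"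
  shows "traffic2 n1 n2 \<phi> q d1 d2 + \<mu> \<le> (1-q)*(traffic1 n1 n2 \<phi> q d1 d2 + \<phi> + \<mu>)"
proof -
  have e: "num_dp n1 (d1(i:=True)) = Suc (num_dp n1 d1)" using num_dp_upd_T[of i n1 d1] assms by simp
  have le: "num_dp n1 (d1(i:=True)) \<le> n1" by (rule num_dp_le)
  have t1: "traffic1 n1 n2 \<phi> q (d1(i:=True)) d2 = traffic1 n1 n2 \<phi> q d1 d2 + \<phi>"
    unfolding traffic1_def using e le by (simp add: algebra_simps)
  have "loss1 n1 n2 \<phi> \<mu> q d1 d2 i \<le> loss1 n1 n2 \<phi> \<mu> q (d1(i:=True)) d2 i" using assms(6) by simp
  then have "\<phi>*(q+(1-q)*(traffic2 n1 n2 \<phi> q d1 d2/(traffic2 n1 n2 \<phi> q d1 d2+\<mu>))) \<le>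
     \<phi>*(traffic1 n1 n2 \<phi> q (d1(i:=True)) d2/(traffic1 n1 n2 \<phi> q (d1(i:=True)) d2+\<mu>))"
    unfolding loss1_def Let_def using assms(5) by simp
  then have "traffic2 n1 n2 \<phi> q d1 d2 + \<mu> \<le> (1-q)*(traffic1 n1 n2 \<phi> q (d1(i:=True)) d2 + \<mu>)"
    using key2 assms(1,2) traffic_nonneg[OF assms(1,3)] by blast
  then show ?thesis using t1 by (simp add: algebra_simps)
qed

lemma condC:
  assumes "\<phi> > 0" "\<mu> > 0" "q \<le> 1" "i < n2" "d2 i"
    and "\<not> loss2 n1 n2 \<phi> \<mu> q d1 (d2(i:=False)) i < loss2 n1 n2 \<phi> \<mu> q d1 d2 i"
  shows "(1-q)*(traffic2 n1 n2 \<phi> q d1 d2 + \<mu>) \<le> traffic1 n1 n2 \<phi> q d1 d2 + (1-q)*\<phi> + \<mu>"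
proof -
  let ?u = "num_dp n2 (d2(i:=False))"
  have e: "num_dp n2 d2 = Suc ?u" using num_dp_upd_F[of i n2 d2] assms by simp
  have le: "num_dp n2 d2 \<le> n2" by (rule num_dp_le)
  have t1: "traffic1 n1 n2 \<phi> q d1 (d2(i:=False)) = traffic1 n1 n2 \<phi> q d1 d2 + (1-q)*\<phi>"
    unfolding traffic1_def using e le by (simp add: of_nat_diff algebra_simps)
  have "loss2 n1 n2 \<phi> \<mu> q d1 d2 i \<le> loss2 n1 n2 \<phi> \<mu> q d1 (d2(i:=False)) i" using assms(6) by simp
  then have "\<phi>*(traffic2 n1 n2 \<phi> q d1 d2/(traffic2 n1 n2 \<phi> q d1 d2+\<mu>)) \<le>
     \<phi>*(q+(1-q)*(traffic1 n1 n2 \<phi> q d1 (d2(i:=False))/(traffic1 n1 n2 \<phi> q d1 (d2(i:=False))+\<mu>)))"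
    unfolding loss2_def Let_def using assms(5) by simp
  then have "(1-q)*(traffic2 n1 n2 \<phi> q d1 d2 + \<mu>) \<le> traffic1 n1 n2 \<phi> q d1 (d2(i:=False)) + \<mu>"
    using key1 assms(1,2) traffic_nonneg[OF assms(1,3)] by blast
  then show ?thesis using t1 by simp
qed

lemma condD:
  assumes "\<phi> > 0" "\<mu> > 0" "q \<le> 1" "i < n2" "\<not> d2 i"
    and "\<not> loss2 n1 n2 \<phi> \<mu> q d1 (d2(i:=True)) i < loss2 n1 n2 \<phi> \<mu> q d1 d2 i"
  shows "traffic1 n1 n2 \<phi> q d1 d2 + \<mu> \<le> (1-q)*(traffic2 n1 n2 \<phi> q d1 d2 + \<phi> + \<mu>)"
proof -
  have e: "num_dp n2 (d2(i:=True)) = Suc (num_dp n2 d2)" using num_dp_upd_T[of i n2 d2] assms by simp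
  have t2: "traffic2 n1 n2 \<phi> q d1 (d2(i:=True)) = traffic2 n1 n2 \<phi> q d1 d2 + \<phi>"
    unfolding traffic2_def using e by (simp add: algebra_simps)
  have "loss2 n1 n2 \<phi> \<mu> q d1 d2 i \<le> loss2 n1 n2 \<phi> \<mu> q d1 (d2(i:=True)) i" using assms(6) by simp
  then have "\<phi>*(q+(1-q)*(traffic1 n1 n2 \<phi> q d1 d2/(traffic1 n1 n2 \<phi> q d1 d2+\<mu>))) \<le>
     \<phi>*(traffic2 n1 n2 \<phi> q d1 (d2(i:=True))/(traffic2 n1 n2 \<phi> q d1 (d2(i:=True))+\<mu>))"
    unfolding loss2_def Let_def using assms(5) by simp
  then have "traffic1 n1 n2 \<phi> q d1 d2 + \<mu> \<le> (1-q)*(traffic2 n1 n2 \<phi> q d1 (d2(i:=True)) + \<mu>)"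
    using key2 assms(1,2) traffic_nonneg[OF assms(1,3)] by blast
  then show ?thesis using t2 by (simp add: algebra_simps)
qed


theorem corollary4:
  fixes n1 n2 :: nat and \<phi> \<mu> q :: real
  assumes "\<phi> > 0" and "\<mu> > 0" and "0 \<le> q" and "q \<le> 1"
    and "n1 \<ge> n2"
    and "real n1 * (1 - q) < q * \<mu> / \<phi> + real n2 + (1 - q)"
    and "q > 2 / real (n1 + n2)"
  shows "nash_eq n1 n2 \<phi> \<mu> q (\<lambda>_. True) (\<lambda>_. True) \<and>
         (\<forall>d1 d2. nash_eq n1 n2 \<phi> \<mu> q d1 d2 \<longrightarrow> (\<forall>i < n1. d1 i) \<and> (\<forall>i < n2. d2 i))"
proof
  have hyp: "real n1 * (1 - q) * \<phi> < q * \<mu> + real n2 * \<phi> + (1 - q) * \<phi>"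
  proof -
    have "real n1 * (1 - q) * \<phi> < (q * \<mu> / \<phi> + real n2 + (1 - q)) * \<phi>"
      using assms(6) assms(1) by (rule mult_strict_right_mono)
    then show ?thesis using assms(1) by (simp add: algebra_simps)
  qed
  let ?T = "\<lambda>_::nat. True"
  have t1: "traffic1 n1 n2 \<phi> q ?T ?T = real n1 * \<phi>" and t2: "traffic2 n1 n2 \<phi> q ?T ?T = real n2 * \<phi>"
    unfolding traffic1_def traffic2_def num_dp_all by simp_all
  have A: "\<not> loss1 n1 n2 \<phi> \<mu> q (?T(i:=b)) ?T i < loss1 n1 n2 \<phi> \<mu> q ?T ?T i" if "i < n1" for i b
  proof (cases b)
    case True
    have "?T(i:=True) = ?T" by (rule ext) simp
    then show ?thesis using True by simp
  next
    case False
    have e: "num_dp n1 (?T(i:=False)) = n1 - 1"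
      using num_dp_upd_F[of i n1 ?T] that num_dp_all[of n1] by simp
    have tt: "traffic2 n1 n2 \<phi> q (?T(i:=False)) ?T = real n2 * \<phi> + (1-q)*\<phi>"
      unfolding traffic2_def e num_dp_all using that by simp
    have "(1-q)*(real n1 * \<phi> + \<mu>) \<le> real n2 * \<phi> + (1-q)*\<phi> + \<mu>"
      using hyp by (simp add: algebra_simps)
    then have "\<phi>*(real n1 * \<phi>/(real n1 * \<phi>+\<mu>)) \<le>
       \<phi>*(q+(1-q)*((real n2 * \<phi> + (1-q)*\<phi>)/((real n2 * \<phi> + (1-q)*\<phi>)+\<mu>)))"
      using key1[of \<phi> \<mu> "real n1 * \<phi>" "real n2 * \<phi> + (1-q)*\<phi>" q] assms(1,2,4) by simp
    then show ?thesis unfolding loss1_def Let_def using False t1 tt by simp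
  qed
  have C: "\<not> loss2 n1 n2 \<phi> \<mu> q ?T (?T(i:=b)) i < loss2 n1 n2 \<phi> \<mu> q ?T ?T i" if "i < n2" for i b
  proof (cases b)
    case True
    have "?T(i:=True) = ?T" by (rule ext) simp
    then show ?thesis using True by simp
  next
    case False
    have e: "num_dp n2 (?T(i:=False)) = n2 - 1"
      using num_dp_upd_F[of i n2 ?T] that num_dp_all[of n2] by simp
    have tt: "traffic1 n1 n2 \<phi> q ?T (?T(i:=False)) = real n1 * \<phi> + (1-q)*\<phi>"
      unfolding traffic1_def e num_dp_all using that by simp
    have "(1-q)*(real n2 * \<phi>) \<le> real n2 * \<phi>" using assms(1,3,4) by (intro mult_left_le_one_le) simp_all
    also have "\<dots> \<le> real n1 * \<phi>" using assms(1,5) by simp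
    finally have fin: "(1-q)*(real n2 * \<phi>) \<le> real n1 * \<phi>" .
    have "(1-q)*(real n2 * \<phi> + \<mu>) \<le> real n1 * \<phi> + (1-q)*\<phi> + \<mu>"
    proof -
      have "\<phi>*q \<le> \<phi>" "\<mu>*q \<ge> 0" using assms(1-4) by simp_all
      then show ?thesis using fin by (simp add: algebra_simps)
    qed
    then have "\<phi>*(real n2 * \<phi>/(real n2 * \<phi>+\<mu>)) \<le>
       \<phi>*(q+(1-q)*((real n1 * \<phi> + (1-q)*\<phi>)/((real n1 * \<phi> + (1-q)*\<phi>)+\<mu>)))"
      using key1[of \<phi> \<mu> "real n2 * \<phi>" "real n1 * \<phi> + (1-q)*\<phi>" q] assms(1,2,4) by simp
    then show ?thesis unfolding loss2_def Let_def using False t2 tt by simp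
  qed
  show "nash_eq n1 n2 \<phi> \<mu> q ?T ?T" unfolding nash_eq_def using A C by blast
next
  have hyp: "real n1 * (1 - q) * \<phi> < q * \<mu> + real n2 * \<phi> + (1 - q) * \<phi>"
  proof -
    have "real n1 * (1 - q) * \<phi> < (q * \<mu> / \<phi> + real n2 + (1 - q)) * \<phi>"
      using assms(6) assms(1) by (rule mult_strict_right_mono)
    then show ?thesis using assms(1) by (simp add: algebra_simps)
  qed
  show "\<forall>d1 d2. nash_eq n1 n2 \<phi> \<mu> q d1 d2 \<longrightarrow> (\<forall>i < n1. d1 i) \<and> (\<forall>i < n2. d2 i)"
  proof (intro allI impI)
    fix d1 d2 assume ne: "nash_eq n1 n2 \<phi> \<mu> q d1 d2"
    define U1 where "U1 = real (num_dp n1 d1)"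
    define U2 where "U2 = real (num_dp n2 d2)"
    have U1le: "U1 \<le> real n1" unfolding U1_def using num_dp_le by simp
    have U2le: "U2 \<le> real n2" unfolding U2_def using num_dp_le by simp
    have U1ge: "U1 \<ge> 0" "U2 \<ge> 0" unfolding U1_def U2_def by simp_all
    have T1: "traffic1 n1 n2 \<phi> q d1 d2 = U1 * \<phi> + (real n2 - U2) * (1-q) * \<phi>"
      unfolding traffic1_def U1_def U2_def using num_dp_le[of n2 d2] by (simp add: of_nat_diff)
    have T2: "traffic2 n1 n2 \<phi> q d1 d2 = U2 * \<phi> + (real n1 - U1) * (1-q) * \<phi>"
      unfolding traffic2_def U1_def U2_def using num_dp_le[of n1 d1] by (simp add: of_nat_diff)
    have qb: "0 \<le> 1 - q" "1 - q \<le> 1" using assms(3,4) by simp_all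
    show "(\<forall>i < n1. d1 i) \<and> (\<forall>i < n2. d2 i)"
    proof (rule ccontr)
      assume "\<not> ?thesis"
      then consider (both) i j where "i < n1" "\<not> d1 i" "j < n2" "\<not> d2 j"
        | (one) i where "i < n1" "\<not> d1 i" "\<forall>j < n2. d2 j"
        | (two) j where "j < n2" "\<not> d2 j" "\<forall>i < n1. d1 i" by blast
      then show False
      proof cases
        case both
        have B: "traffic2 n1 n2 \<phi> q d1 d2 + \<mu> \<le> (1-q)*(traffic1 n1 n2 \<phi> q d1 d2 + \<phi> + \<mu>)"
          using ne both(1,2) assms(1,2,4) unfolding nash_eq_def by (intro condB) auto
        have D: "traffic1 n1 n2 \<phi> q d1 d2 + \<mu> \<le> (1-q)*(traffic2 n1 n2 \<phi> q d1 d2 + \<phi> + \<mu>)"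
          using ne both(3,4) assms(1,2,4) unfolding nash_eq_def by (intro condD) auto
        define S where "S = traffic1 n1 n2 \<phi> q d1 d2 + traffic2 n1 n2 \<phi> q d1 d2"
        have sum: "q * (S + 2*\<mu>) \<le> 2*(1-q)*\<phi>" using B D unfolding S_def by (simp add: algebra_simps)
        have npos: "real (n1+n2) > 0" using both by simp
        have qn: "q * real (n1+n2) > 2" using assms(7) npos by (simp add: field_simps)
        have qpos: "q > 0" using qn assms(3) by (cases "q = 0") auto
        have Sge: "S \<ge> (1-q) * real (n1+n2) * \<phi>"
        proof -
          have "S - (1-q) * real (n1+n2) * \<phi> = q * ((U1 + U2) * \<phi>)"
            unfolding S_def T1 T2 by (simp add: algebra_simps)
          also have "\<dots> \<ge> 0" using qpos U1ge assms(1) by simp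
          finally show ?thesis by simp
        qed
        have "2 * ((1-q)*\<phi>) \<le> (q * real (n1+n2)) * ((1-q)*\<phi>)"
          using qn qb assms(1) by (intro mult_right_mono) simp_all
        also have "\<dots> = q * ((1-q) * real (n1+n2) * \<phi>)" by (simp add: algebra_simps)
        also have "\<dots> \<le> q * S" using Sge qpos by simp
        finally have "2*((1-q)*\<phi>) \<le> q * S" .
        moreover have "q * \<mu> > 0" using qpos assms(2) by simp
        moreover have "2*((1-q)*\<phi>) = 2*(1-q)*\<phi>" "q * (S + 2*\<mu>) = q*S + 2*(q*\<mu>)" by (simp_all add: algebra_simps)
        ultimately show False using sum by linarith
      next
        case one
        have U2e: "U2 = real n2" unfolding U2_def using one(3)
        proof -
          have "{j. j < n2 \<and> d2 j} = {..<n2}" using one(3) by auto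
          then show "real (num_dp n2 d2) = real n2" unfolding num_dp_def by simp
        qed
        have U1l: "U1 \<le> real n1 - 1" unfolding U1_def using num_dp_less[of i n1 d1] one by linarith
        have B: "traffic2 n1 n2 \<phi> q d1 d2 + \<mu> \<le> (1-q)*(traffic1 n1 n2 \<phi> q d1 d2 + \<phi> + \<mu>)"
          using ne one(1,2) assms(1,2,4) unfolding nash_eq_def by (intro condB) auto
        have m: "(1-q)*\<phi>*U1 \<le> (1-q)*\<phi>*(real n1 - 1)"
          using U1l qb assms(1) by (intro mult_left_mono) simp_all
        show False using B m hyp unfolding T1 T2 U2e by (simp add: algebra_simps)
      next
        case two
        have U1e: "U1 = real n1"
        proof -
          have "{j. j < n1 \<and> d1 j} = {..<n1}" using two(3) by auto
          then show ?thesis unfolding U1_def num_dp_def by simp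
        qed
        have U2l: "U2 \<le> real n2 - 1" unfolding U2_def using num_dp_less[of j n2 d2] two by linarith
        have D: "traffic1 n1 n2 \<phi> q d1 d2 + \<mu> \<le> (1-q)*(traffic2 n1 n2 \<phi> q d1 d2 + \<phi> + \<mu>)"
          using ne two(1,2) assms(1,2,4) unfolding nash_eq_def by (intro condD) auto
        define P where "P = (1-q)*\<phi>"
        have D': "real n1 * \<phi> + real n2 * P - U2 * P + \<mu> \<le> U2 * P + P + \<mu> - q * \<mu>"
          using D unfolding T1 T2 U1e P_def by (simp add: algebra_simps)
        have m: "U2 * P \<le> real n2 * P - P"
        proof -
          have "U2 * P \<le> (real n2 - 1) * P" using U2l qb assms(1) unfolding P_def
            by (intro mult_right_mono) simp_all
          then show ?thesis by (simp add: algebra_simps)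
        qed
        have m2: "real n2 * P - P \<le> real n2 * \<phi> - \<phi>"
        proof -
          have "(1-q)*(\<phi>*(real n2 - 1)) \<le> \<phi>*(real n2 - 1)"
            using qb assms(1) two(1) by (intro mult_left_le_one_le) simp_all
          then show ?thesis unfolding P_def by (simp add: algebra_simps)
        qed
        have "q * \<mu> \<ge> 0" using assms(2,3) by simp
        moreover have "real n2 * \<phi> \<le> real n1 * \<phi>" using assms(1,5) by simp
        ultimately show False using D' m m2 assms(1) by linarith
      qed
    qed
  qed
qed

end
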